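(* Let $p, \sigma \in \mathbb{R}$ and let $u \geq 0$ be a non-trivial function in $C^2(0,+\infty)$ solving $-u''(r) = r^\sigma u(r)^p$ for all $r \in (0,+\infty)$ (no continuity at $0$ assumed). Then: (1) $u$ is non-decreasing and $u'$ is non-increasing on $(0,+\infty)$; (2) there exist constants $c>0$, $C>0$ and $r_1>0$ such that $c \leq u(r) \leq C r$ for all $r \geq r_1$.
   Context: For $p=0$ the term $u^p$ is understood as $1$; for $p<0$ it is required that $u>0$ on $(0,+\infty)$. *)

theory Defs
  imports Complex_Main
begin

text \<open>Real power u^p with the paper's convention: for p = 0 the term is 1;
  otherwise it is the usual real power (u powr p), used for u \<ge> 0 when p > 0
  and for u > 0 when p < 0.\<close>
definition rpow :: "real \<Rightarrow> real \<Rightarrow> real" where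
  "rpow x p = (if p = 0 then 1 else x powr p)"

end

theory Submission
  imports Defs
begin

theorem lemma2p4:
  fixes u u' u'' :: "real \<Rightarrow> real" and p \<sigma> :: real
  assumes d1: "\<And>r. r > 0 \<Longrightarrow> (u has_real_derivative u' r) (at r)"
    and d2: "\<And>r. r > 0 \<Longrightarrow> (u' has_real_derivative u'' r) (at r)"
    and c2: "continuous_on {0<..} u''"
    and nonneg: "\<And>r. r > 0 \<Longrightarrow> u r \<ge> 0"
    and pos_if_neg: "p < 0 \<Longrightarrow> (\<And>r. r > 0 \<Longrightarrow> u r > 0)"
    and nontriv: "\<exists>r>0. u r \<noteq> 0"
    and eq: "\<And>r. r > 0 \<Longrightarrow> - u'' r = r powr \<sigma> * rpow (u r) p"
  shows "mono_on {0<..} u \<and> monotone_on {0<..} (\<le>) (\<ge>) u'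
         \<and> (\<exists>c>0. \<exists>C>0. \<exists>r1>0. \<forall>r\<ge>r1. c \<le> u r \<and> u r \<le> C * r)"
proof -
  have neg2: "u'' r \<le> 0" if "r > 0" for r
  proof -
    have "rpow (u r) p \<ge> 0" by (simp add: rpow_def)
    hence "r powr \<sigma> * rpow (u r) p \<ge> 0" by simp
    with eq[OF that] show ?thesis by linarith
  qed
  have dec: "u' b \<le> u' a" if "0 < a" "a \<le> b" for a b
  proof (rule DERIV_nonpos_imp_nonincreasing[OF that(2)])
    fix x assume "a \<le> x" "x \<le> b"
    hence "x > 0" using that by simp
    thus "\<exists>y. DERIV u' x :> y \<and> y \<le> 0" using d2 neg2 by blast
  qed
  have conc: "u r \<le> u a + u' a * (r - a)" if "0 < a" "a \<le> r" for a r
  proof -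
    let ?g = "\<lambda>x. u x - u a - u' a * (x - a)"
    have "?g r \<le> ?g a"
    proof (rule DERIV_nonpos_imp_nonincreasing[OF that(2)])
      fix x assume x: "a \<le> x" "x \<le> r"
      have "DERIV ?g x :> u' x - 0 - u' a * (1 - 0)"
        using that x by (auto intro!: derivative_eq_intros d1)
      moreover have "u' x - 0 - u' a * (1 - 0) \<le> 0" using dec[of a x] that x by simp
      ultimately show "\<exists>y. DERIV ?g x :> y \<and> y \<le> 0" by blast
    qed
    thus ?thesis by simp
  qed
  have d1pos: "u' a \<ge> 0" if "a > 0" for a
  proof (rule ccontr)
    assume "\<not> u' a \<ge> 0"
    hence n: "u' a < 0" by simp
    define r where "r = a + u a / (- u' a) + 1"
    have ua: "u a \<ge> 0" using nonneg that by simp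
    have "u a / (- u' a) \<ge> 0" using ua n by (intro divide_nonneg_pos) auto
    hence ar: "a \<le> r" by (simp add: r_def)
    have ra: "r - a = u a / (- u' a) + 1" by (simp add: r_def)
    have "u' a * (r - a) = u' a * (u a / (- u' a)) + u' a" unfolding ra using n by (simp add: field_simps)
    also have "u' a * (u a / (- u' a)) = - u a" using n by simp
    finally have "u r \<le> u' a" using conc[OF that ar] by simp
    moreover have "u r \<ge> 0" using nonneg that ar by simp
    ultimately show False using n by simp
  qed
  have m1: "mono_on {0<..} u"
  proof (rule monotone_onI)
    fix x y :: real assume "x \<in> {0<..}" "y \<in> {0<..}" "x \<le> y"
    then show "u x \<le> u y"
    proof (intro DERIV_nonneg_imp_nondecreasing[OF \<open>x \<le> y\<close>])
      fix z assume "x \<le> z" "z \<le> y"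
      hence "z > 0" using \<open>x \<in> {0<..}\<close> by simp
      thus "\<exists>y. DERIV u z :> y \<and> y \<ge> 0" using d1 d1pos by blast
    qed
  qed
  have m2: "monotone_on {0<..} (\<le>) (\<ge>) u'"
    by (rule monotone_onI) (use dec in auto)
  obtain r0 where r0: "r0 > 0" "u r0 \<noteq> 0" using nontriv by blast
  have ur0: "u r0 > 0" using nonneg[OF r0(1)] r0(2) by simp
  have B: "\<forall>r\<ge>max r0 1. u r0 \<le> u r \<and> u r \<le> (u 1 + u' 1 + 1) * r"
  proof (intro allI impI conjI)
    fix r assume r: "max r0 1 \<le> r"
    show "u r0 \<le> u r" using monotone_onD[OF m1, of r0 r] r r0 by simp
    have "u r \<le> u 1 + u' 1 * (r - 1)" using conc[of 1 r] r by simp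
    also have "\<dots> \<le> (u 1 + u' 1 + 1) * r"
    proof -
      have r1: "r \<ge> 1" using r by simp
      have "u 1 \<le> u 1 * r" using nonneg[of 1] r1 mult_left_mono[of 1 r "u 1"] by simp
      moreover have "u' 1 * (r - 1) \<le> u' 1 * r" using d1pos[of 1] by (simp add: algebra_simps)
      ultimately show ?thesis using r1 by (simp add: algebra_simps)
    qed
    finally show "u r \<le> (u 1 + u' 1 + 1) * r" .
  qed
  have Cp: "u 1 + u' 1 + 1 > 0" using nonneg[of 1] d1pos[of 1] by simp
  have M: "max r0 1 > 0" by simp
  have "\<exists>c>0. \<exists>C>0. \<exists>r1>0. \<forall>r\<ge>r1. c \<le> u r \<and> u r \<le> C * r"
    using ur0 Cp M B by blast
  with m1 m2 show ?thesis by blast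
qed

end
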